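(* Let $n\ge1$. The map $\mathrm{GDes}\colon\mathfrak{S}_n\to\mathcal{Q}_n$ is order preserving, and for all $u\in\mathfrak{S}_n$ and $J\subseteq[n-1]$, $$\zeta_J\le u\iff J\subseteq\mathrm{GDes}(u).$$ That is, $(Z,\mathrm{GDes})$ with $Z(J)=\zeta_J$ is a Galois connection $\mathcal{Q}_n\rightleftarrows\mathfrak{S}_n$.
   Context: $\mathcal{Q}_n$ is the Boolean poset of subsets of $[n-1]$ ordered by inclusion. $\mathfrak{S}_n$ carries the weak order: $u\le v$ iff $\mathrm{Inv}(u)\subseteq\mathrm{Inv}(v)$, $\mathrm{Inv}(u)=\{(i,j):i<j,\ u_i>u_j\}$ (one-line notation). A permutation $u\in\mathfrak{S}_n$ has a global descent at $p\in[n-1]$ if $u_i>u_j$ for all $i\le p<j$ (equivalently $\{u_1,\ldots,u_p\}=\{n-p+1,\ldots,n\}$); $\mathrm{GDes}(u)$ is the set of global descents. For $J=\{p_1<\cdots<p_k\}\subseteq[n-1]$, $\zeta_J=(n{-}p_1{+}1,\ldots,n,\ n{-}p_2{+}1,\ldots,n{-}p_1,\ \ldots,\ 1,\ldots,n{-}p_k)$, and $\zeta_\emptyset=1_n$. *)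

theory Defs
  imports "HOL-Combinatorics.Permutations"
begin

text \<open>Permutations of [n] are functions nat => nat that permute {1..n} (identity elsewhere),
  read in one-line notation u = (u 1, ..., u n).\<close>

definition Inv :: "nat \<Rightarrow> (nat \<Rightarrow> nat) \<Rightarrow> (nat \<times> nat) set" where
  "Inv n u = {(i, j). 1 \<le> i \<and> i < j \<and> j \<le> n \<and> u i > u j}"

definition weak_le :: "nat \<Rightarrow> (nat \<Rightarrow> nat) \<Rightarrow> (nat \<Rightarrow> nat) \<Rightarrow> bool" where
  "weak_le n u v \<longleftrightarrow> Inv n u \<subseteq> Inv n v"

definition GDes :: "nat \<Rightarrow> (nat \<Rightarrow> nat) \<Rightarrow> nat set" where
  "GDes n u = {p \<in> {1..n-1}. \<forall>i j. 1 \<le> i \<and> i \<le> p \<and> p < j \<and> j \<le> n \<longrightarrow> u i > u j}"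

text \<open>zeta_J: for J = {p_1 < ... < p_k} (with p_0 = 0, p_(k+1) = n), positions
  p_(m-1)+1..p_m carry the values n-p_m+1, ..., n-p_(m-1) in increasing order.\<close>
definition zeta :: "nat \<Rightarrow> nat set \<Rightarrow> nat \<Rightarrow> nat" where
  "zeta n J i = (if 1 \<le> i \<and> i \<le> n then
      (let a = Max {p \<in> insert 0 J. p < i}; b = Min {p \<in> insert n J. i \<le> p}
       in n - b + (i - a))
    else i)"

end

theory Submission
  imports Defs
begin

lemma zeta_inv:
  assumes J: "J \<subseteq> {1..n-1}" and ij: "1 \<le> i" "i < j" "j \<le> n"
  shows "zeta n J i > zeta n J j \<longleftrightarrow> (\<exists>p\<in>J. i \<le> p \<and> p < j)"
proof -
  have fJ: "finite J" using J finite_subset by blast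
  define a where "a k = Max {p \<in> insert 0 J. p < k}" for k
  define b where "b k = Min {p \<in> insert n J. k \<le> p}" for k
  have fa: "finite {p \<in> insert 0 J. p < k}" for k using fJ by simp
  have fb: "finite {p \<in> insert n J. k \<le> p}" for k using fJ by simp
  have a_in: "a k \<in> insert 0 J \<and> a k < k" if "1 \<le> k" for k
  proof -
    have "{p \<in> insert 0 J. p < k} \<noteq> {}" using that by auto
    from Max_in[OF fa this] show ?thesis unfolding a_def by blast
  qed
  have a_ge: "p \<le> a k" if "p \<in> insert 0 J" "p < k" for p k
    unfolding a_def using fa that by (intro Max_ge) auto
  have b_in: "b k \<in> insert n J \<and> k \<le> b k" if "k \<le> n" for k
  proof -
    have "{p \<in> insert n J. k \<le> p} \<noteq> {}" using that by auto
    from Min_in[OF fb this] show ?thesis unfolding b_def by blast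
  qed
  have b_le: "b k \<le> p" if "p \<in> insert n J" "k \<le> p" for p k
    unfolding b_def using fb that by (intro Min_le) auto
  have bn: "b k \<le> n" if "k \<le> n" for k using b_le[of n k] that by simp
  have zi: "zeta n J i = n - b i + (i - a i)" using ij unfolding zeta_def a_def b_def by (simp add: Let_def)
  have zj: "zeta n J j = n - b j + (j - a j)" using ij unfolding zeta_def a_def b_def by (simp add: Let_def)
  have ai: "a i \<in> insert 0 J" "a i < i" using a_in ij by auto
  have aj: "a j \<in> insert 0 J" "a j < j" using a_in ij by auto
  have bi: "b i \<in> insert n J" "i \<le> b i" using b_in ij by auto
  have bj: "b j \<in> insert n J" "j \<le> b j" using b_in ij by auto
  show ?thesis
  proof
    assume "\<exists>p\<in>J. i \<le> p \<and> p < j"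
    then obtain p where p: "p \<in> J" "i \<le> p" "p < j" by blast
    have "b i \<le> p" using b_le p by blast
    moreover have "p \<le> a j" using a_ge p by blast
    ultimately show "zeta n J i > zeta n J j" using zi zj ai aj bi bj bn[of i] bn[of j] ij by linarith
  next
    assume gt: "zeta n J i > zeta n J j"
    show "\<exists>p\<in>J. i \<le> p \<and> p < j"
    proof (rule ccontr)
      assume np: "\<not> ?thesis"
      have "a i \<le> a j" using a_ge ai ij by fastforce
      have "a j \<le> a i"
      proof (rule ccontr)
        assume "\<not> a j \<le> a i"
        hence "i \<le> a j" using a_ge[of "a j" i] aj by fastforce
        thus False using np aj ij by auto
      qed
      have "b i \<le> b j" using b_le bi bj ij by fastforce
      have "b j \<le> b i"
      proof (rule ccontr)
        assume "\<not> b j \<le> b i"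
        hence "b i < j" using b_le[of "b i" j] bi by fastforce
        thus False using np bi ij by auto
      qed
      show False using gt zi zj \<open>a i \<le> a j\<close> \<open>a j \<le> a i\<close> \<open>b i \<le> b j\<close> \<open>b j \<le> b i\<close> ij ai aj by linarith
    qed
  qed
qed

theorem mainTheorem4:
  fixes n :: nat
  assumes "n \<ge> 1"
  shows "(\<forall>u v. u permutes {1..n} \<longrightarrow> v permutes {1..n} \<longrightarrow> weak_le n u v
            \<longrightarrow> GDes n u \<subseteq> GDes n v)
       \<and> (\<forall>u J. u permutes {1..n} \<longrightarrow> J \<subseteq> {1..n-1} \<longrightarrow>
            (weak_le n (zeta n J) u \<longleftrightarrow> J \<subseteq> GDes n u))"
proof (intro conjI allI impI)
  fix u v :: "nat \<Rightarrow> nat"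
  assume "weak_le n u v"
  hence sub: "Inv n u \<subseteq> Inv n v" by (simp add: weak_le_def)
  show "GDes n u \<subseteq> GDes n v"
  proof
    fix p assume "p \<in> GDes n u"
    hence p: "p \<in> {1..n-1}" "\<And>i j. 1 \<le> i \<and> i \<le> p \<and> p < j \<and> j \<le> n \<Longrightarrow> u i > u j"
      by (auto simp: GDes_def)
    have "v i > v j" if "1 \<le> i \<and> i \<le> p \<and> p < j \<and> j \<le> n" for i j
    proof -
      have "(i, j) \<in> Inv n u" using p(2)[OF that] that by (auto simp: Inv_def)
      with sub show ?thesis by (auto simp: Inv_def)
    qed
    thus "p \<in> GDes n v" using p(1) by (auto simp: GDes_def)
  qed
next
  fix u :: "nat \<Rightarrow> nat" and J
  assume J: "J \<subseteq> {1..n-1}"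
  have invz: "Inv n (zeta n J) = {(i, j). 1 \<le> i \<and> i < j \<and> j \<le> n \<and> (\<exists>p\<in>J. i \<le> p \<and> p < j)}"
    using zeta_inv[OF J] unfolding Inv_def by auto
  show "weak_le n (zeta n J) u \<longleftrightarrow> J \<subseteq> GDes n u"
  proof
    assume "weak_le n (zeta n J) u"
    hence sub: "Inv n (zeta n J) \<subseteq> Inv n u" by (simp add: weak_le_def)
    show "J \<subseteq> GDes n u"
    proof
      fix p assume p: "p \<in> J"
      have "u i > u j" if "1 \<le> i \<and> i \<le> p \<and> p < j \<and> j \<le> n" for i j
      proof -
        have "(i, j) \<in> Inv n (zeta n J)" using invz p that by auto
        with sub show ?thesis by (auto simp: Inv_def)
      qed
      thus "p \<in> GDes n u" using p J by (auto simp: GDes_def)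
    qed
  next
    assume JG: "J \<subseteq> GDes n u"
    show "weak_le n (zeta n J) u"
      unfolding weak_le_def invz
    proof
      fix x assume "x \<in> {(i, j). 1 \<le> i \<and> i < j \<and> j \<le> n \<and> (\<exists>p\<in>J. i \<le> p \<and> p < j)}"
      then obtain i j p where x: "x = (i, j)" "1 \<le> i" "i < j" "j \<le> n" "p \<in> J" "i \<le> p" "p < j" by blast
      have "p \<in> GDes n u" using JG x by blast
      hence "u i > u j" using x by (auto simp: GDes_def)
      thus "x \<in> Inv n u" using x by (auto simp: Inv_def)
    qed
  qed
qed

end
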